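(* Let $V=\mathbf R^{p,q}$ be a pseudo-Euclidean vector space with inner product $\langle\cdot,\cdot\rangle$, and let $T$ be a $(3,1)$-tensor on $V$ (a trilinear map $V^3\to V$) having the same symmetries as a $(3,1)$-curvature tensor. Let $V_1,V_2\subset V$ be subspaces such that $V_1\cap V_2$ is non-degenerate and $V=V_1+V_2$. If $T(V_i,V_i,V_i)=0$ for $i=1,2$ and the image of $T$ is contained in $V_1\cap V_2$, then $T=0$.
   Context: "The same symmetries as a $(3,1)$-curvature tensor" means: $T(u,v)w=-T(v,u)w$, the first Bianchi identity $T(u,v)w+T(v,w)u+T(w,u)v=0$, and $\langle T(u,v)w,z\rangle=-\langle T(u,v)z,w\rangle$ (hence also pair symmetry $\langle T(u,v)w,z\rangle=\langle T(w,z)u,v\rangle$), writing $T(u,v,w)=T(u,v)w$. *)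

theory Defs
  imports "HOL-Analysis.Analysis"
begin

text \<open>Pseudo-Euclidean space R^{p,q}: the coordinate space real^'n equipped with the
  diagonal inner product of signs eps i \<in> {1,-1}; p = number of +1 signs, q = number of -1 signs.\<close>

definition sign_vec :: "('n::finite \<Rightarrow> real) \<Rightarrow> bool" where
  "sign_vec eps \<longleftrightarrow> (\<forall>i. eps i = 1 \<or> eps i = -1)"

definition pinner :: "('n::finite \<Rightarrow> real) \<Rightarrow> real^'n \<Rightarrow> real^'n \<Rightarrow> real" where
  "pinner eps x y = (\<Sum>i\<in>UNIV. eps i * (x $ i) * (y $ i))"

definition trilinear :: "('a::real_vector \<Rightarrow> 'a \<Rightarrow> 'a \<Rightarrow> 'a) \<Rightarrow> bool" where
  "trilinear T \<longleftrightarrow> (\<forall>v w. linear (\<lambda>u. T u v w)) \<and> (\<forall>u w. linear (\<lambda>v. T u v w))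
                     \<and> (\<forall>u v. linear (\<lambda>w. T u v w))"

definition curvature_like :: "('n::finite \<Rightarrow> real) \<Rightarrow> (real^'n \<Rightarrow> real^'n \<Rightarrow> real^'n \<Rightarrow> real^'n) \<Rightarrow> bool" where
  "curvature_like eps T \<longleftrightarrow>
     (\<forall>u v w. T u v w = - T v u w) \<and>
     (\<forall>u v w. T u v w + T v w u + T w u v = 0) \<and>
     (\<forall>u v w z. pinner eps (T u v w) z = - pinner eps (T u v z) w)"

definition nondegenerate :: "('n::finite \<Rightarrow> real) \<Rightarrow> (real^'n) set \<Rightarrow> bool" where
  "nondegenerate eps W \<longleftrightarrow> (\<forall>x\<in>W. (\<forall>y\<in>W. pinner eps x y = 0) \<longrightarrow> x = 0)"

end

theory Submission
  imports Defs
begin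

lemma pair_sym:
  fixes R :: "'a \<Rightarrow> 'a \<Rightarrow> 'a \<Rightarrow> 'a \<Rightarrow> real"
  assumes a1: "\<And>x y z w. R x y z w = - R y x z w"
    and a2: "\<And>x y z w. R x y z w = - R x y w z"
    and b: "\<And>x y z w. R x y z w + R y z x w + R z x y w = 0"
  shows "R x y z w = R z w x y"
  using b[of x y z w] b[of y z w x] b[of z w x y] b[of w x y z] a1[of x y z w] a2[of x y z w] a2[of y x z w] a1[of y z x w] a2[of y z x w] a2[of z y x w] a1[of z x y w] a2[of z x y w] a2[of x z y w] a1[of y z w x] a2[of y z w x] a2[of z y w x] a1[of z w y x] a2[of z w y x] a2[of w z y x] a1[of w y z x] a2[of w y z x] a2[of y w z x] a1[of z w x y] a2[of z w x y] a2[of w z x y] a1[of w x z y] a2[of w x z y] a2[of x w z y] a1[of x z w y] a2[of x z w y] a2[of z x w y] a1[of w x y z] a2[of w x y z] a2[of x w y z] a1[of x y w z] a2[of x y w z] a2[of y x w z] a1[of y w x z] a2[of y w x z] a2[of w y x z]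
  by linarith

lemma pinner_add: "pinner eps (a + b) z = pinner eps a z + pinner eps b z"
  by (simp add: pinner_def sum.distrib algebra_simps)

lemma pinner_zero: "pinner eps 0 z = 0"
  by (simp add: pinner_def)

lemma key:
  fixes eps :: "'n::finite \<Rightarrow> real"
    and T :: "real^'n \<Rightarrow> real^'n \<Rightarrow> real^'n \<Rightarrow> real^'n"
  assumes cl: "curvature_like eps T"
    and H: "\<forall>u\<in>S. \<forall>v\<in>S. \<forall>w\<in>S. T u v w = 0"
    and y: "y \<in> S"
    and two: "(a \<in> S \<and> b \<in> S) \<or> (a \<in> S \<and> c \<in> S) \<or> (b \<in> S \<and> c \<in> S)"
  shows "pinner eps (T a b c) y = 0"
proof -
  define R where "R = (\<lambda>u v w z. pinner eps (T u v w) z)"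
  have s1: "\<And>u v w. T u v w = - T v u w" using cl unfolding curvature_like_def by blast
  have bi: "\<And>u v w. T u v w + T v w u + T w u v = 0" using cl unfolding curvature_like_def by blast
  have s2: "\<And>u v w z. pinner eps (T u v w) z = - pinner eps (T u v z) w"
    using cl unfolding curvature_like_def by blast
  have neg: "\<And>x z. pinner eps (- x) z = - pinner eps x z"
    by (simp add: pinner_def sum_negf)
  have a1: "\<And>x y z w. R x y z w = - R y x z w" unfolding R_def using s1 neg by metis
  have a2: "\<And>x y z w. R x y z w = - R x y w z" unfolding R_def using s2 by metis
  have b: "\<And>x y z w. R x y z w + R y z x w + R z x y w = 0"
  proof -
    fix x y z w
    have "pinner eps (T x y z + T y z x + T z x y) w = 0" using bi pinner_zero by metis
    thus "R x y z w + R y z x w + R z x y w = 0" unfolding R_def pinner_add .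
  qed
  have ps: "\<And>x y z w. R x y z w = R z w x y" by (rule pair_sym[OF a1 a2 b])
  show ?thesis using two
  proof (elim disjE conjE)
    assume "a \<in> S" "b \<in> S"
    then show ?thesis using a2[of a b c y] H y pinner_zero unfolding R_def by simp
  next
    assume "a \<in> S" "c \<in> S"
    then show ?thesis using ps[of a b c y] H y pinner_zero unfolding R_def by simp
  next
    assume "b \<in> S" "c \<in> S"
    then show ?thesis using a1[of a b c y] ps[of b a c y] H y pinner_zero unfolding R_def by simp
  qed
qed

theorem lemma4p4:
  fixes eps :: "'n::finite \<Rightarrow> real"
    and T :: "real^'n \<Rightarrow> real^'n \<Rightarrow> real^'n \<Rightarrow> real^'n"
    and V1 V2 :: "(real^'n) set"
  assumes "sign_vec eps"
    and "trilinear T"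
    and "curvature_like eps T"
    and "subspace V1" and "subspace V2"
    and "nondegenerate eps (V1 \<inter> V2)"
    and "V1 + V2 = UNIV"
    and "\<forall>u\<in>V1. \<forall>v\<in>V1. \<forall>w\<in>V1. T u v w = 0"
    and "\<forall>u\<in>V2. \<forall>v\<in>V2. \<forall>w\<in>V2. T u v w = 0"
    and "\<forall>u v w. T u v w \<in> V1 \<inter> V2"
  shows "\<forall>u v w. T u v w = 0"
proof (intro allI)
  fix u v w
  have C: "pinner eps (T a b c) y = 0"
    if "a \<in> V1 \<union> V2" "b \<in> V1 \<union> V2" "c \<in> V1 \<union> V2" "y \<in> V1 \<inter> V2" for a b c y
  proof -
    have "((a \<in> V1 \<and> b \<in> V1) \<or> (a \<in> V1 \<and> c \<in> V1) \<or> (b \<in> V1 \<and> c \<in> V1))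
       \<or> ((a \<in> V2 \<and> b \<in> V2) \<or> (a \<in> V2 \<and> c \<in> V2) \<or> (b \<in> V2 \<and> c \<in> V2))"
      using that by blast
    then show ?thesis
    proof
      assume h: "(a \<in> V1 \<and> b \<in> V1) \<or> (a \<in> V1 \<and> c \<in> V1) \<or> (b \<in> V1 \<and> c \<in> V1)"
      show ?thesis by (rule key[OF assms(3) assms(8) _ h]) (use that in blast)
    next
      assume h: "(a \<in> V2 \<and> b \<in> V2) \<or> (a \<in> V2 \<and> c \<in> V2) \<or> (b \<in> V2 \<and> c \<in> V2)"
      show ?thesis by (rule key[OF assms(3) assms(9) _ h]) (use that in blast)
    qed
  qed
  have l1: "\<And>v w. linear (\<lambda>u. T u v w)" and l2: "\<And>u w. linear (\<lambda>v. T u v w)"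
    and l3: "\<And>u v. linear (\<lambda>w. T u v w)" using assms(2) unfolding trilinear_def by auto
  have ad1: "T (a + b) v w = T a v w + T b v w" for a b v w using linear_add[OF l1] by simp
  have ad2: "T u (a + b) w = T u a w + T u b w" for a b u w using linear_add[OF l2] by simp
  have ad3: "T u v (a + b) = T u v a + T u v b" for a b u v using linear_add[OF l3] by simp
  have dec: "\<exists>x1 x2. x1 \<in> V1 \<and> x2 \<in> V2 \<and> x = x1 + x2" for x
    using assms(7) by (metis UNIV_I set_plus_elim)
  obtain u1 u2 where u: "u1 \<in> V1" "u2 \<in> V2" "u = u1 + u2" using dec by blast
  obtain v1 v2 where v: "v1 \<in> V1" "v2 \<in> V2" "v = v1 + v2" using dec by blast
  obtain w1 w2 where w: "w1 \<in> V1" "w2 \<in> V2" "w = w1 + w2" using dec by blast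
  have "pinner eps (T u v w) y = 0" if "y \<in> V1 \<inter> V2" for y
    unfolding u(3) v(3) w(3) ad1 ad2 ad3 pinner_add
    using C[OF _ _ _ that] u v w by simp
  moreover have "T u v w \<in> V1 \<inter> V2" using assms(10) by blast
  ultimately show "T u v w = 0" using assms(6) unfolding nondegenerate_def by blast
qed

end
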